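(* In a non-degenerate RiFle assignment game, for every stable payoff $(\bar u,\bar v)$ there is exactly one matching $\mu$ such that $(\bar u,\bar v;\mu)$ is a stable outcome.
   Context: A RiFle assignment game consists of two disjoint sets of agents $P=\{p_1,\dots,p_n\}$ and $Q=\{q_1,\dots,q_n\}$, a pair of nonnegative real numbers $(\beta_{ij},\gamma_{ij})$ for every pair $(p_i,q_j)\in P\times Q$ (write $\alpha_{ij}=\beta_{ij}+\gamma_{ij}$), and a designation of every agent as rigid or flexible. Let $\mathcal R$ be the set of pairs with at least one rigid agent and $\mathcal F$ the set of pairs with both agents flexible. An outcome $(\bar u,\bar v;\mu)$ consists of a matching $\mu$ between $P$ and $Q$ (write $p_i\stackrel{\mu}{\longleftrightarrow} q_j$) and payoff vectors $\bar u,\bar v\in\mathbb R^n$. It is feasible if: (1) $u_i\ge0$, $v_j\ge0$; (2) if a rigid $p_i$ is matched to $q_j$ then $u_i=\beta_{ij}$ and, if $q_j$ is flexible, $v_j\ge\gamma_{ij}$; symmetrically for a rigid $q_j$ matched to $p_i$: $v_j=\gamma_{ij}$ and, if $p_i$ is flexible, $u_i\ge\beta_{ij}$; (3) $\sum_iu_i+\sum_jv_j=\sum_{p_i\stackrel{\mu}{\longleftrightarrow}q_j}\alpha_{ij}$. It is stable if feasible and $u_i+v_j\ge\alpha_{ij}$ for $(p_i,q_j)\in\mathcal F$ and ($u_i\ge\beta_{ij}$ or $v_j\ge\gamma_{ij}$) for $(p_i,q_j)\in\mathcal R$. A payoff $(\bar u,\bar v)$ is stable if $(\bar u,\bar v;\mu)$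 is a stable outcome for some matching $\mu$. Reservation prices are modeled by rigid dummy agents; for the following definition an agent left unmatched by a matching is regarded as matched to a rigid dummy agent (whose prescribed share for him is his reservation price). Given a coalition $C\subseteq P\cup Q$ and a matching $\mu$, the total payoff to $C$ under $\mu$ is forced if every pair matched under $\mu$ with one agent in $C$ and the other outside $C$ contains a rigid agent; the forced payoff is then $\sum_{p_i\in C,\ p_i\stackrel{\mu}{\longleftrightarrow}q_j}\beta_{ij}+\sum_{q_j\in C,\ p_i\stackrel{\mu}{\longleftrightarrow}q_j}\gamma_{ij}$. The game is non-degenerate if for any two matchings $\mu,\mu'$: whenever $C$ is a minimal coalition such that the payoff to $C$ is forced under both $\mu$ and $\mu'$, and the two forced payoffs are equal, then $\mu$ and $\mu'$ coincide on $C$. *)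

theory Defs
  imports Complex_Main
begin

text \<open>Agents p_0..p_(n-1) and q_0..q_(n-1) are indexed by {..<n}.
  beta i j, gamma i j are the shares of (p_i,q_j); rp i / rq j say whether p_i / q_j is rigid.
  A matching is a perfect matching between P and Q, represented by its set of pairs (i,j),
  meaning p_i is matched to q_j.\<close>

definition perfect_matching :: "nat \<Rightarrow> (nat \<times> nat) set \<Rightarrow> bool" where
  "perfect_matching n M \<longleftrightarrow> M \<subseteq> {..<n} \<times> {..<n}
     \<and> (\<forall>i<n. \<exists>!j. (i, j) \<in> M) \<and> (\<forall>j<n. \<exists>!i. (i, j) \<in> M)"

definition rifle_game :: "nat \<Rightarrow> (nat \<Rightarrow> nat \<Rightarrow> real) \<Rightarrow> (nat \<Rightarrow> nat \<Rightarrow> real) \<Rightarrow> bool" where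
  "rifle_game n beta gamma \<longleftrightarrow> (\<forall>i<n. \<forall>j<n. 0 \<le> beta i j \<and> 0 \<le> gamma i j)"

definition feasible_outcome ::
  "nat \<Rightarrow> (nat \<Rightarrow> nat \<Rightarrow> real) \<Rightarrow> (nat \<Rightarrow> nat \<Rightarrow> real) \<Rightarrow> (nat \<Rightarrow> bool) \<Rightarrow> (nat \<Rightarrow> bool)
   \<Rightarrow> (nat \<Rightarrow> real) \<Rightarrow> (nat \<Rightarrow> real) \<Rightarrow> (nat \<times> nat) set \<Rightarrow> bool" where
  "feasible_outcome n beta gamma rp rq u v M \<longleftrightarrow>
     perfect_matching n M
     \<and> (\<forall>i<n. 0 \<le> u i) \<and> (\<forall>j<n. 0 \<le> v j)
     \<and> (\<forall>(i, j) \<in> M. rp i \<longrightarrow> u i = beta i j \<and> (\<not> rq j \<longrightarrow> v j \<ge> gamma i j))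
     \<and> (\<forall>(i, j) \<in> M. rq j \<longrightarrow> v j = gamma i j \<and> (\<not> rp i \<longrightarrow> u i \<ge> beta i j))
     \<and> (\<Sum>i<n. u i) + (\<Sum>j<n. v j) = (\<Sum>(i, j) \<in> M. beta i j + gamma i j)"

definition stable_outcome ::
  "nat \<Rightarrow> (nat \<Rightarrow> nat \<Rightarrow> real) \<Rightarrow> (nat \<Rightarrow> nat \<Rightarrow> real) \<Rightarrow> (nat \<Rightarrow> bool) \<Rightarrow> (nat \<Rightarrow> bool)
   \<Rightarrow> (nat \<Rightarrow> real) \<Rightarrow> (nat \<Rightarrow> real) \<Rightarrow> (nat \<times> nat) set \<Rightarrow> bool" where
  "stable_outcome n beta gamma rp rq u v M \<longleftrightarrow>
     feasible_outcome n beta gamma rp rq u v M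
     \<and> (\<forall>i<n. \<forall>j<n. (\<not> rp i \<and> \<not> rq j \<longrightarrow> u i + v j \<ge> beta i j + gamma i j)
                   \<and> ((rp i \<or> rq j) \<longrightarrow> u i \<ge> beta i j \<or> v j \<ge> gamma i j))"

definition stable_payoff ::
  "nat \<Rightarrow> (nat \<Rightarrow> nat \<Rightarrow> real) \<Rightarrow> (nat \<Rightarrow> nat \<Rightarrow> real) \<Rightarrow> (nat \<Rightarrow> bool) \<Rightarrow> (nat \<Rightarrow> bool)
   \<Rightarrow> (nat \<Rightarrow> real) \<Rightarrow> (nat \<Rightarrow> real) \<Rightarrow> bool" where
  "stable_payoff n beta gamma rp rq u v \<longleftrightarrow> (\<exists>M. stable_outcome n beta gamma rp rq u v M)"

definition payoff_forced ::
  "(nat \<Rightarrow> bool) \<Rightarrow> (nat \<Rightarrow> bool) \<Rightarrow> (nat \<times> nat) set \<Rightarrow> nat set \<Rightarrow> nat set \<Rightarrow> bool" where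
  "payoff_forced rp rq M CP CQ \<longleftrightarrow>
     (\<forall>(i, j) \<in> M. ((i \<in> CP) \<noteq> (j \<in> CQ)) \<longrightarrow> rp i \<or> rq j)"

definition forced_payoff ::
  "(nat \<Rightarrow> nat \<Rightarrow> real) \<Rightarrow> (nat \<Rightarrow> nat \<Rightarrow> real) \<Rightarrow> (nat \<times> nat) set \<Rightarrow> nat set \<Rightarrow> nat set \<Rightarrow> real" where
  "forced_payoff beta gamma M CP CQ =
     (\<Sum>(i, j) \<in> {(i, j) \<in> M. i \<in> CP}. beta i j) + (\<Sum>(i, j) \<in> {(i, j) \<in> M. j \<in> CQ}. gamma i j)"

definition minimal_forced_coalition ::
  "nat \<Rightarrow> (nat \<Rightarrow> bool) \<Rightarrow> (nat \<Rightarrow> bool) \<Rightarrow> (nat \<times> nat) set \<Rightarrow> (nat \<times> nat) set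
   \<Rightarrow> nat set \<Rightarrow> nat set \<Rightarrow> bool" where
  "minimal_forced_coalition n rp rq M M' CP CQ \<longleftrightarrow>
     CP \<subseteq> {..<n} \<and> CQ \<subseteq> {..<n} \<and> (CP \<noteq> {} \<or> CQ \<noteq> {})
     \<and> payoff_forced rp rq M CP CQ \<and> payoff_forced rp rq M' CP CQ
     \<and> (\<forall>CP' CQ'. CP' \<subseteq> CP \<and> CQ' \<subseteq> CQ \<and> (CP', CQ') \<noteq> (CP, CQ) \<and> (CP' \<noteq> {} \<or> CQ' \<noteq> {})
          \<longrightarrow> \<not> (payoff_forced rp rq M CP' CQ' \<and> payoff_forced rp rq M' CP' CQ'))"

definition coincide_on :: "(nat \<times> nat) set \<Rightarrow> (nat \<times> nat) set \<Rightarrow> nat set \<Rightarrow> nat set \<Rightarrow> bool" where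
  "coincide_on M M' CP CQ \<longleftrightarrow>
     (\<forall>i \<in> CP. \<forall>j. (i, j) \<in> M \<longleftrightarrow> (i, j) \<in> M')
     \<and> (\<forall>j \<in> CQ. \<forall>i. (i, j) \<in> M \<longleftrightarrow> (i, j) \<in> M')"

definition non_degenerate ::
  "nat \<Rightarrow> (nat \<Rightarrow> nat \<Rightarrow> real) \<Rightarrow> (nat \<Rightarrow> nat \<Rightarrow> real) \<Rightarrow> (nat \<Rightarrow> bool) \<Rightarrow> (nat \<Rightarrow> bool) \<Rightarrow> bool" where
  "non_degenerate n beta gamma rp rq \<longleftrightarrow>
     (\<forall>M M' CP CQ. perfect_matching n M \<and> perfect_matching n M'
        \<and> minimal_forced_coalition n rp rq M M' CP CQ
        \<and> forced_payoff beta gamma M CP CQ = forced_payoff beta gamma M' CP CQ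
        \<longrightarrow> coincide_on M M' CP CQ)"

end

theory Submission
  imports Defs
begin

lemma pm_finite: "perfect_matching n M \<Longrightarrow> finite M"
  unfolding perfect_matching_def by (meson finite_SigmaI finite_lessThan finite_subset)

lemma pm_fst: assumes "perfect_matching n M" shows "bij_betw fst M {..<n}"
proof -
  have sub: "M \<subseteq> {..<n} \<times> {..<n}" and A: "\<forall>i<n. \<exists>!j. (i, j) \<in> M"
    using assms unfolding perfect_matching_def by auto
  have "inj_on fst M"
  proof (rule inj_onI)
    fix x y assume "x \<in> M" "y \<in> M" "fst x = fst y"
    then show "x = y" using sub A
      by (metis (no_types, lifting) SigmaD1 lessThan_iff prod.collapse subsetD)
  qed
  moreover have "fst ` M = {..<n}"
  proof
    show "fst ` M \<subseteq> {..<n}" using sub by auto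
    show "{..<n} \<subseteq> fst ` M"
    proof
      fix i assume "i \<in> {..<n}"
      then obtain j where "(i, j) \<in> M" using A by auto
      then show "i \<in> fst ` M" by force
    qed
  qed
  ultimately show ?thesis by (simp add: bij_betw_def)
qed

lemma pm_snd: assumes "perfect_matching n M" shows "bij_betw snd M {..<n}"
proof -
  have sub: "M \<subseteq> {..<n} \<times> {..<n}" and A: "\<forall>j<n. \<exists>!i. (i, j) \<in> M"
    using assms unfolding perfect_matching_def by auto
  have "inj_on snd M"
  proof (rule inj_onI)
    fix x y assume "x \<in> M" "y \<in> M" "snd x = snd y"
    then show "x = y" using sub A
      by (metis (no_types, lifting) SigmaD2 lessThan_iff prod.collapse subsetD)
  qed
  moreover have "snd ` M = {..<n}"
  proof
    show "snd ` M \<subseteq> {..<n}" using sub by auto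
    show "{..<n} \<subseteq> snd ` M"
    proof
      fix j assume "j \<in> {..<n}"
      then obtain i where "(i, j) \<in> M" using A by auto
      then show "j \<in> snd ` M" by force
    qed
  qed
  ultimately show ?thesis by (simp add: bij_betw_def)
qed

lemma sum_fst: "perfect_matching n M \<Longrightarrow> (\<Sum>p\<in>M. f (fst p)) = (\<Sum>i<n. f i)"
  using pm_fst sum.reindex_bij_betw by blast

lemma sum_snd: "perfect_matching n M \<Longrightarrow> (\<Sum>p\<in>M. f (snd p)) = (\<Sum>i<n. f i)"
  using pm_snd sum.reindex_bij_betw by blast

lemma pair_eq:
  assumes st: "stable_outcome n beta gamma rp rq u v M" and ij: "(i, j) \<in> M"
  shows "u i + v j = beta i j + gamma i j"
    and "rp i \<or> rq j \<Longrightarrow> u i = beta i j \<and> v j = gamma i j"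
proof -
  have fe: "feasible_outcome n beta gamma rp rq u v M" using st by (simp add: stable_outcome_def)
  have pm: "perfect_matching n M" using fe by (simp add: feasible_outcome_def)
  have fin: "finite M" using pm_finite[OF pm] .
  have sub: "M \<subseteq> {..<n} \<times> {..<n}" using pm by (simp add: perfect_matching_def)
  define d where "d p = u (fst p) + v (snd p) - (beta (fst p) (snd p) + gamma (fst p) (snd p))" for p
  have nn: "d p \<ge> 0" if "p \<in> M" for p
  proof -
    obtain a b where p: "p = (a, b)" by force
    have ab: "a < n" "b < n" using sub that p by auto
    show ?thesis
    proof (cases "rp a \<or> rq b")
      case False
      then show ?thesis using st ab unfolding stable_outcome_def d_def p by auto
    next
      case True
      then show ?thesis using fe that unfolding feasible_outcome_def d_def p
        by (cases "rp a"; cases "rq b"; fastforce)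
    qed
  qed
  have "(\<Sum>p\<in>M. d p) = (\<Sum>p\<in>M. u (fst p)) + (\<Sum>p\<in>M. v (snd p))
      - (\<Sum>p\<in>M. beta (fst p) (snd p) + gamma (fst p) (snd p))"
    unfolding d_def by (simp add: sum.distrib sum_subtractf)
  also have "\<dots> = (\<Sum>i<n. u i) + (\<Sum>j<n. v j) - (\<Sum>(i, j)\<in>M. beta i j + gamma i j)"
    using sum_fst[OF pm, of u] sum_snd[OF pm, of v] by (simp add: case_prod_beta)
  also have "\<dots> = 0" using fe by (simp add: feasible_outcome_def)
  finally have "(\<Sum>p\<in>M. d p) = 0" .
  then have "d (i, j) = 0" using sum_nonneg_eq_0_iff[OF fin] nn ij by blast
  then show eq: "u i + v j = beta i j + gamma i j" by (simp add: d_def)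
  assume r: "rp i \<or> rq j"
  show "u i = beta i j \<and> v j = gamma i j"
    using r fe ij eq unfolding feasible_outcome_def by (cases "rp i"; fastforce)
qed

lemma forced_val:
  assumes st: "stable_outcome n beta gamma rp rq u v M"
    and fo: "payoff_forced rp rq M X Y"
  shows "forced_payoff beta gamma M X Y = (\<Sum>i<n. if i \<in> X then u i else 0) + (\<Sum>j<n. if j \<in> Y then v j else 0)"
proof -
  have fe: "feasible_outcome n beta gamma rp rq u v M" using st by (simp add: stable_outcome_def)
  have pm: "perfect_matching n M" using fe by (simp add: feasible_outcome_def)
  have fin: "finite M" using pm_finite[OF pm] .
  have s1: "{(i, j) \<in> M. i \<in> X} = {p \<in> M. fst p \<in> X}" by auto
  have s2: "{(i, j) \<in> M. j \<in> Y} = {p \<in> M. snd p \<in> Y}" by auto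
  have e1: "(\<Sum>(i, j) \<in> {(i, j) \<in> M. i \<in> X}. beta i j) = (\<Sum>p\<in>M. if fst p \<in> X then beta (fst p) (snd p) else 0)"
    using sum.inter_filter[OF fin, of "\<lambda>p. beta (fst p) (snd p)" "\<lambda>p. fst p \<in> X"]
    unfolding s1 by (simp add: case_prod_beta)
  have e2: "(\<Sum>(i, j) \<in> {(i, j) \<in> M. j \<in> Y}. gamma i j) = (\<Sum>p\<in>M. if snd p \<in> Y then gamma (fst p) (snd p) else 0)"
    using sum.inter_filter[OF fin, of "\<lambda>p. gamma (fst p) (snd p)" "\<lambda>p. snd p \<in> Y"]
    unfolding s2 by (simp add: case_prod_beta)
  have pw: "(if fst p \<in> X then beta (fst p) (snd p) else 0) + (if snd p \<in> Y then gamma (fst p) (snd p) else 0)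
      = (if fst p \<in> X then u (fst p) else 0) + (if snd p \<in> Y then v (snd p) else 0)" if "p \<in> M" for p
  proof -
    obtain a b where p: "p = (a, b)" by force
    have m: "(a, b) \<in> M" using that p by simp
    have c: "(a \<in> X) \<noteq> (b \<in> Y) \<Longrightarrow> rp a \<or> rq b" using fo m unfolding payoff_forced_def by auto
    show ?thesis using pair_eq[OF st m] c unfolding p by auto
  qed
  have "forced_payoff beta gamma M X Y = (\<Sum>p\<in>M. (if fst p \<in> X then beta (fst p) (snd p) else 0) + (if snd p \<in> Y then gamma (fst p) (snd p) else 0))"
    unfolding forced_payoff_def e1 e2 by (simp add: sum.distrib)
  also have "\<dots> = (\<Sum>p\<in>M. (if fst p \<in> X then u (fst p) else 0) + (if snd p \<in> Y then v (snd p) else 0))"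
    using pw by (rule sum.cong[OF refl])
  also have "\<dots> = (\<Sum>p\<in>M. (if fst p \<in> X then u (fst p) else 0)) + (\<Sum>p\<in>M. (if snd p \<in> Y then v (snd p) else 0))"
    by (simp add: sum.distrib)
  also have "\<dots> = (\<Sum>i<n. if i \<in> X then u i else 0) + (\<Sum>j<n. if j \<in> Y then v j else 0)"
    using sum_fst[OF pm, of "\<lambda>i. if i \<in> X then u i else 0"] sum_snd[OF pm, of "\<lambda>j. if j \<in> Y then v j else 0"]
    by simp
  finally show ?thesis .
qed

lemma forced_diff:
  "payoff_forced rp rq M X Y \<Longrightarrow> payoff_forced rp rq M X' Y' \<Longrightarrow> X' \<subseteq> X \<Longrightarrow> Y' \<subseteq> Y
   \<Longrightarrow> payoff_forced rp rq M (X - X') (Y - Y')"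
  unfolding payoff_forced_def by blast

lemma core:
  assumes nd: "non_degenerate n beta gamma rp rq"
    and st: "stable_outcome n beta gamma rp rq u v M"
    and st': "stable_outcome n beta gamma rp rq u v M'"
    and ij: "(i, j) \<in> M"
  shows "(i, j) \<in> M'"
proof -
  have pm: "perfect_matching n M" using st by (simp add: stable_outcome_def feasible_outcome_def)
  have pm': "perfect_matching n M'" using st' by (simp add: stable_outcome_def feasible_outcome_def)
  have sub: "M \<subseteq> {..<n} \<times> {..<n}" using pm by (simp add: perfect_matching_def)
  have sub': "M' \<subseteq> {..<n} \<times> {..<n}" using pm' by (simp add: perfect_matching_def)
  have i: "i < n" using sub ij by auto
  define P where "P c \<longleftrightarrow> fst c \<subseteq> {..<n} \<and> snd c \<subseteq> {..<n} \<and> i \<in> fst c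
      \<and> payoff_forced rp rq M (fst c) (snd c) \<and> payoff_forced rp rq M' (fst c) (snd c)" for c :: "nat set \<times> nat set"
  have "P ({..<n}, {..<n})" unfolding P_def payoff_forced_def using i sub sub' by auto
  then obtain c where Pc: "P c" and minc: "\<And>d. P d \<Longrightarrow> card (fst c) + card (snd c) \<le> card (fst d) + card (snd d)"
    using ex_has_least_nat[where P=P and m="\<lambda>c. card (fst c) + card (snd c)"] by blast
  obtain X Y where c: "c = (X, Y)" by force
  have XY: "X \<subseteq> {..<n}" "Y \<subseteq> {..<n}" "i \<in> X" "payoff_forced rp rq M X Y" "payoff_forced rp rq M' X Y"
    using Pc unfolding P_def c by auto
  have finX: "finite X" and finY: "finite Y" using XY finite_subset by blast+
  have "minimal_forced_coalition n rp rq M M' X Y"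
    unfolding minimal_forced_coalition_def
  proof (intro conjI allI impI)
    show "X \<subseteq> {..<n}" "Y \<subseteq> {..<n}" "payoff_forced rp rq M X Y" "payoff_forced rp rq M' X Y" using XY by auto
    show "X \<noteq> {} \<or> Y \<noteq> {}" using XY by auto
    fix X' Y' assume h: "X' \<subseteq> X \<and> Y' \<subseteq> Y \<and> (X', Y') \<noteq> (X, Y) \<and> (X' \<noteq> {} \<or> Y' \<noteq> {})"
    show "\<not> (payoff_forced rp rq M X' Y' \<and> payoff_forced rp rq M' X' Y')"
    proof
      assume f: "payoff_forced rp rq M X' Y' \<and> payoff_forced rp rq M' X' Y'"
      have cX: "card X' \<le> card X" "card Y' \<le> card Y" using h finX finY card_mono by blast+
      show False
      proof (cases "i \<in> X'")
        case True
        then have "P (X', Y')" using f h XY unfolding P_def by auto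
        then have le: "card X + card Y \<le> card X' + card Y'" using minc c by fastforce
        have "card X' < card X \<or> card Y' < card Y"
        proof (cases "X' = X")
          case True
          then have "Y' \<subset> Y" using h by auto
          then show ?thesis using finY psubset_card_mono by blast
        next
          case False
          then have "X' \<subset> X" using h by auto
          then show ?thesis using finX psubset_card_mono by blast
        qed
        then show False using le cX by linarith
      next
        case False
        then have "P (X - X', Y - Y')" using f h XY forced_diff unfolding P_def by auto
        then have le: "card X + card Y \<le> card (X - X') + card (Y - Y')" using minc c by fastforce
        have s1: "{(i, j) \<in> M. i \<in> X} = {p \<in> M. fst p \<in> X}" by auto
  have s2: "{(i, j) \<in> M. j \<in> Y} = {p \<in> M. snd p \<in> Y}" by auto
  have e1: "card (X - X') = card X - card X'" using h finX card_Diff_subset finite_subset by metis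
        have e2: "card (Y - Y') = card Y - card Y'" using h finY card_Diff_subset finite_subset by metis
        have "card X' > 0 \<or> card Y' > 0" using h finX finY finite_subset card_gt_0_iff by metis
        then show False using le e1 e2 cX by linarith
      qed
    qed
  qed
  moreover have "forced_payoff beta gamma M X Y = forced_payoff beta gamma M' X Y"
    using forced_val[OF st XY(4)] forced_val[OF st' XY(5)] by simp
  ultimately have "coincide_on M M' X Y" using nd pm pm' unfolding non_degenerate_def by blast
  then show ?thesis using XY(3) ij unfolding coincide_on_def by blast
qed

theorem proposition4:
  fixes n :: nat and beta gamma :: "nat \<Rightarrow> nat \<Rightarrow> real"
    and rp rq :: "nat \<Rightarrow> bool" and u v :: "nat \<Rightarrow> real"
  assumes "rifle_game n beta gamma"
    and "non_degenerate n beta gamma rp rq"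
    and "stable_payoff n beta gamma rp rq u v"
  shows "\<exists>!M. stable_outcome n beta gamma rp rq u v M"
proof -
  obtain M where M: "stable_outcome n beta gamma rp rq u v M"
    using assms(3) unfolding stable_payoff_def by blast
  have "M' = M" if M': "stable_outcome n beta gamma rp rq u v M'" for M'
  proof (rule set_eqI)
    fix p :: "nat \<times> nat"
    obtain a b where p: "p = (a, b)" by force
    show "p \<in> M' \<longleftrightarrow> p \<in> M"
      unfolding p using core[OF assms(2) M M'] core[OF assms(2) M' M] by blast
  qed
  then show ?thesis using M by blast
qed

end
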